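(* Let $\varphi$ be a growth function on $\mathbb{R}^n\times[0,\infty)$. Then the weak Musielak–Orlicz space $WL^\varphi(\mathbb{R}^n)$ is complete with respect to its quasi-norm $\|\cdot\|_{WL^\varphi}$.
   Context: A Musielak–Orlicz function is a map $\varphi:\mathbb{R}^n\times[0,\infty)\to[0,\infty)$ such that for every $x$, $\varphi(x,\cdot)$ is an Orlicz function (nondecreasing, $\varphi(x,0)=0$, $\varphi(x,t)>0$ for $t>0$, $\lim_{t\to\infty}\varphi(x,t)=\infty$), and for every $t$, $\varphi(\cdot,t)$ is measurable. $\varphi$ is of uniformly lower (resp. upper) type $p$ if there is $C>0$ with $\varphi(x,st)\le Cs^p\varphi(x,t)$ for all $x$, $t\ge0$, $s\in(0,1]$ (resp. $s\in[1,\infty)$). For $q\in(1,\infty)$, $\varphi\in\mathbb{A}_q$ means there is $C$ such that for every ball $B$ and $t>0$, $\frac{1}{|B|}\int_B\varphi(x,t)\,dx\,\big(\frac{1}{|B|}\int_B\varphi(x,t)^{-1/(q-1)}dx\big)^{q-1}\le C$; $\varphi\in\mathbb{A}_1$ means $\frac{1}{|B|}\int_B\varphi(x,t)\,dx\cdot\operatorname{ess\,sup}_{B}\varphi(\cdot,t)^{-1}\le C$; $\mathbb{A}_\infty:=\bigcup_{q\ge1}\mathbb{A}_q$. A growth function is a Musielak–Orlicz function in $\mathbb{A}_\infty$ of uniformly lower type $p$ for some $p\in(0,1]$ and of uniformly upper type $1$. For $E\subset\mathbb{R}^n$, $\varphi(E,t):=\int_E\varphi(x,t)\,dx$ and $\{|f|>t\}:=\{x:|f(x)|>t\}$.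 $WL^\varphi(\mathbb{R}^n)$ is the set of measurable $f$ such that $\sup_{t\in(0,\infty)}\varphi(\{|f|>t\},t/\lambda)<\infty$ for some $\lambda>0$, with $\|f\|_{WL^\varphi}:=\inf\{\lambda>0:\sup_{t\in(0,\infty)}\varphi(\{|f|>t\},t/\lambda)\le1\}$. *)

theory Defs
  imports "HOL-Analysis.Analysis" "HOL-Probability.Essential_Supremum"
begin

type_synonym 'n MOfun = "real ^ 'n \<Rightarrow> real \<Rightarrow> real"

definition orlicz_fun :: "(real \<Rightarrow> real) \<Rightarrow> bool" where
  "orlicz_fun g \<longleftrightarrow> mono_on {0..} g \<and> g 0 = 0 \<and> (\<forall>t>0. g t > 0) \<and> (g \<longlongrightarrow> \<infinity>) at_top"

definition musielak_orlicz :: "'n::finite MOfun \<Rightarrow> bool" where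
  "musielak_orlicz \<phi> \<longleftrightarrow> (\<forall>x. orlicz_fun (\<phi> x)) \<and>
     (\<forall>t\<ge>0. (\<lambda>x. \<phi> x t) \<in> borel_measurable lebesgue)"

definition unif_lower_type :: "'n::finite MOfun \<Rightarrow> real \<Rightarrow> bool" where
  "unif_lower_type \<phi> p \<longleftrightarrow> (\<exists>C>0. \<forall>x t s. t \<ge> 0 \<longrightarrow> 0 < s \<longrightarrow> s \<le> 1 \<longrightarrow>
      \<phi> x (s * t) \<le> C * s powr p * \<phi> x t)"

definition unif_upper_type :: "'n::finite MOfun \<Rightarrow> real \<Rightarrow> bool" where
  "unif_upper_type \<phi> p \<longleftrightarrow> (\<exists>C>0. \<forall>x t s. t \<ge> 0 \<longrightarrow> 1 \<le> s \<longrightarrow>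
      \<phi> x (s * t) \<le> C * s powr p * \<phi> x t)"

definition phiE :: "'n::finite MOfun \<Rightarrow> (real ^ 'n) set \<Rightarrow> real \<Rightarrow> ennreal" where
  "phiE \<phi> E t = (\<integral>\<^sup>+ x \<in> E. ennreal (\<phi> x t) \<partial>lebesgue)"

text \<open>Uniform Muckenhoupt class A_q, q > 1 (the averages are required to be finite,
  which is implied by the bound since both averages are positive).\<close>
definition A_q :: "real \<Rightarrow> 'n::finite MOfun \<Rightarrow> bool" where
  "A_q q \<phi> \<longleftrightarrow> (\<exists>C. \<forall>x0 r t. r > 0 \<longrightarrow> t > 0 \<longrightarrow>
     phiE \<phi> (ball x0 r) t < \<infinity> \<and>
     (\<integral>\<^sup>+ x \<in> ball x0 r. ennreal (\<phi> x t powr (-1 / (q - 1))) \<partial>lebesgue) < \<infinity> \<and>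
     (enn2real (phiE \<phi> (ball x0 r) t) / measure lebesgue (ball x0 r)) *
     (enn2real (\<integral>\<^sup>+ x \<in> ball x0 r. ennreal (\<phi> x t powr (-1 / (q - 1))) \<partial>lebesgue)
        / measure lebesgue (ball x0 r)) powr (q - 1) \<le> C)"

definition A_1 :: "'n::finite MOfun \<Rightarrow> bool" where
  "A_1 \<phi> \<longleftrightarrow> (\<exists>C. \<forall>x0 r t. r > 0 \<longrightarrow> t > 0 \<longrightarrow>
     phiE \<phi> (ball x0 r) t < \<infinity> \<and>
     ereal (enn2real (phiE \<phi> (ball x0 r) t) / measure lebesgue (ball x0 r)) *
       esssup (restrict_space lebesgue (ball x0 r)) (\<lambda>x. ereal (1 / \<phi> x t)) \<le> ereal C)"

definition A_infty :: "'n::finite MOfun \<Rightarrow> bool" where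
  "A_infty \<phi> \<longleftrightarrow> A_1 \<phi> \<or> (\<exists>q>1. A_q q \<phi>)"

definition growth_function :: "'n::finite MOfun \<Rightarrow> bool" where
  "growth_function \<phi> \<longleftrightarrow> musielak_orlicz \<phi> \<and> A_infty \<phi> \<and>
     (\<exists>p. 0 < p \<and> p \<le> 1 \<and> unif_lower_type \<phi> p) \<and> unif_upper_type \<phi> 1"

definition WL :: "'n::finite MOfun \<Rightarrow> (real ^ 'n \<Rightarrow> real) set" where
  "WL \<phi> = {f. f \<in> borel_measurable lebesgue \<and>
     (\<exists>lam>0. (SUP t\<in>{0<..}. phiE \<phi> {x. \<bar>f x\<bar> > t} (t / lam)) < \<infinity>)}"

definition WL_norm :: "'n::finite MOfun \<Rightarrow> (real ^ 'n \<Rightarrow> real) \<Rightarrow> real" where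
  "WL_norm \<phi> f = Inf {lam. lam > 0 \<and> (SUP t\<in>{0<..}. phiE \<phi> {x. \<bar>f x\<bar> > t} (t / lam)) \<le> 1}"

end

theory Submission
  imports Defs
begin

definition Mf :: "'n::finite MOfun \<Rightarrow> (real ^ 'n \<Rightarrow> real) \<Rightarrow> real \<Rightarrow> ennreal" where
  "Mf \<phi> f lam = (SUP t\<in>{0<..}. phiE \<phi> {x. \<bar>f x\<bar> > t} (t / lam))"

lemma WL_Mf: "WL \<phi> = {f. f \<in> borel_measurable lebesgue \<and> (\<exists>lam>0. Mf \<phi> f lam < \<infinity>)}"
  unfolding WL_def Mf_def by simp

lemma WL_norm_Mf: "WL_norm \<phi> f = Inf {lam. lam > 0 \<and> Mf \<phi> f lam \<le> 1}"
  unfolding WL_norm_def Mf_def by simp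

lemma mo_nonneg: "musielak_orlicz \<phi> \<Longrightarrow> 0 \<le> t \<Longrightarrow> 0 \<le> \<phi> x t"
  unfolding musielak_orlicz_def orlicz_fun_def
  by (metis atLeast_iff mono_onD order_refl)

lemma mo_mono: "musielak_orlicz \<phi> \<Longrightarrow> 0 \<le> s \<Longrightarrow> s \<le> t \<Longrightarrow> \<phi> x s \<le> \<phi> x t"
  unfolding musielak_orlicz_def orlicz_fun_def
  by (meson atLeast_iff mono_onD order_trans)

lemma mo_pos: "musielak_orlicz \<phi> \<Longrightarrow> 0 < t \<Longrightarrow> 0 < \<phi> x t"
  unfolding musielak_orlicz_def orlicz_fun_def by blast

lemma mo_meas: "musielak_orlicz \<phi> \<Longrightarrow> 0 \<le> t \<Longrightarrow> (\<lambda>x. \<phi> x t) \<in> borel_measurable lebesgue"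
  unfolding musielak_orlicz_def by blast

lemma sets_gt:
  fixes f :: "real^'n::finite \<Rightarrow> real" assumes f[measurable]: "f \<in> borel_measurable lebesgue"
  shows "{x. t < \<bar>f x\<bar>} \<in> sets lebesgue"
proof -
  have "{x. t < \<bar>f x\<bar>} = {x \<in> space lebesgue. t < \<bar>f x\<bar>}" by simp
  also have "\<dots> \<in> sets lebesgue" by measurable
  finally show ?thesis .
qed

lemma phiE_mono_t:
  assumes "musielak_orlicz \<phi>" "0 \<le> s" "s \<le> t"
  shows "phiE \<phi> E s \<le> phiE \<phi> E t"
  unfolding phiE_def
  by (intro nn_integral_mono) (auto simp: indicator_def intro!: ennreal_leI mo_mono[OF assms])

lemma Mf_mono:
  assumes "musielak_orlicz \<phi>" "0 < lam" "lam \<le> lam'"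
  shows "Mf \<phi> f lam' \<le> Mf \<phi> f lam"
  unfolding Mf_def
proof (intro SUP_mono bexI)
  fix t :: real assume t: "t \<in> {0<..}"
  show "phiE \<phi> {x. t < \<bar>f x\<bar>} (t / lam') \<le> phiE \<phi> {x. t < \<bar>f x\<bar>} (t / lam)"
    using t assms by (intro phiE_mono_t) (auto intro: divide_left_mono)
qed (auto)

lemma norm_lt:
  assumes "musielak_orlicz \<phi>" "\<exists>lam>0. Mf \<phi> f lam \<le> 1" "WL_norm \<phi> f < e"
  shows "Mf \<phi> f e \<le> 1"
proof -
  have "{lam. lam > 0 \<and> Mf \<phi> f lam \<le> 1} \<noteq> {}" using assms(2) by auto
  from cInf_lessD[OF this] assms(3) obtain lam where "lam > 0" "Mf \<phi> f lam \<le> 1" "lam < e"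
    unfolding WL_norm_Mf by auto
  then show ?thesis using Mf_mono[OF assms(1), of lam e f] by auto
qed

lemma norm_le:
  assumes "0 < e" "Mf \<phi> f e \<le> 1"
  shows "0 \<le> WL_norm \<phi> f \<and> WL_norm \<phi> f \<le> e"
  unfolding WL_norm_Mf
proof
  show "0 \<le> Inf {lam. lam > 0 \<and> Mf \<phi> f lam \<le> 1}"
    using assms by (intro cInf_greatest) auto
  show "Inf {lam. lam > 0 \<and> Mf \<phi> f lam \<le> 1} \<le> e"
    using assms by (intro cInf_lower) (auto intro: bdd_belowI[of _ 0])
qed

lemma phiE_scale:
  assumes mo: "musielak_orlicz \<phi>" and C: "C > 0"
    and lt: "\<forall>x t s. t \<ge> 0 \<longrightarrow> 0 < s \<longrightarrow> s \<le> 1 \<longrightarrow> \<phi> x (s * t) \<le> C * s powr p * \<phi> x t"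
    and E: "E \<in> sets lebesgue" and s: "0 < s" "s \<le> 1" and u: "0 \<le> u"
  shows "phiE \<phi> E (s * u) \<le> ennreal (C * s powr p) * phiE \<phi> E u"
proof -
  have "phiE \<phi> E (s * u) \<le> (\<integral>\<^sup>+ x. ennreal (C * s powr p) * (ennreal (\<phi> x u) * indicator E x) \<partial>lebesgue)"
    unfolding phiE_def
  proof (intro nn_integral_mono)
    fix x
    have "\<phi> x (s * u) \<le> C * s powr p * \<phi> x u" using lt s u by blast
    moreover have "0 \<le> \<phi> x u" using mo_nonneg[OF mo u] .
    ultimately show "ennreal (\<phi> x (s * u)) * indicator E x \<le> ennreal (C * s powr p) * (ennreal (\<phi> x u) * indicator E x)"
      using C by (auto simp: indicator_def ennreal_mult[symmetric] intro!: ennreal_leI)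
  qed
  also have "\<dots> = ennreal (C * s powr p) * phiE \<phi> E u"
  proof -
    note [measurable] = E mo_meas[OF mo u]
    show ?thesis unfolding phiE_def by (intro nn_integral_cmult) measurable
  qed
  finally show ?thesis .
qed

lemma Mf_scale:
  assumes mo: "musielak_orlicz \<phi>" and C: "C > 0"
    and lt: "\<forall>x t s. t \<ge> 0 \<longrightarrow> 0 < s \<longrightarrow> s \<le> 1 \<longrightarrow> \<phi> x (s * t) \<le> C * s powr p * \<phi> x t"
    and f[measurable]: "f \<in> borel_measurable lebesgue" and s: "0 < s" "s \<le> 1" and lam: "0 < lam"
  shows "Mf \<phi> f (lam / s) \<le> ennreal (C * s powr p) * Mf \<phi> f lam"
  unfolding Mf_def
proof (intro SUP_least)
  fix t :: real assume t: "t \<in> {0<..}"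
  have E: "{x. t < \<bar>f x\<bar>} \<in> sets lebesgue" by (rule sets_gt[OF f])
  have "t / (lam / s) = s * (t / lam)" using s by simp
  then have "phiE \<phi> {x. t < \<bar>f x\<bar>} (t / (lam / s)) \<le> ennreal (C * s powr p) * phiE \<phi> {x. t < \<bar>f x\<bar>} (t / lam)"
    using phiE_scale[OF mo C lt E s, of "t / lam"] t lam by (simp only:) simp
  also have "\<dots> \<le> ennreal (C * s powr p) * (SUP t\<in>{0<..}. phiE \<phi> {x. \<bar>f x\<bar> > t} (t / lam))"
    using t by (intro mult_left_mono SUP_upper) auto
  finally show "phiE \<phi> {x. t < \<bar>f x\<bar>} (t / (lam / s)) \<le> ennreal (C * s powr p) * (SUP t\<in>{0<..}. phiE \<phi> {x. \<bar>f x\<bar> > t} (t / lam))" .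
qed

lemma Mf_tri:
  assumes mo: "musielak_orlicz \<phi>"
    and f[measurable]: "f \<in> borel_measurable lebesgue" and g[measurable]: "g \<in> borel_measurable lebesgue"
    and h: "\<And>x. \<bar>h x\<bar> \<le> \<bar>f x\<bar> + \<bar>g x\<bar>" and lam: "0 < lam"
  shows "Mf \<phi> h (2 * lam) \<le> Mf \<phi> f lam + Mf \<phi> g lam"
  unfolding Mf_def
proof (intro SUP_least)
  fix t :: real assume t: "t \<in> {0<..}"
  define u where "u = (t / 2) / lam"
  have u: "0 \<le> u" using t lam by (simp add: u_def)
  note [measurable] = mo_meas[OF mo u]
  have eq: "t / (2 * lam) = u" by (simp add: u_def)
  have "phiE \<phi> {x. t < \<bar>h x\<bar>} (t / (2 * lam)) \<le>
     (\<integral>\<^sup>+ x. ennreal (\<phi> x u) * indicator {x. t/2 < \<bar>f x\<bar>} x + ennreal (\<phi> x u) * indicator {x. t/2 < \<bar>g x\<bar>} x \<partial>lebesgue)"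
    unfolding phiE_def eq
  proof (intro nn_integral_mono)
    fix x
    have "t < \<bar>h x\<bar> \<Longrightarrow> t/2 < \<bar>f x\<bar> \<or> t/2 < \<bar>g x\<bar>" using h[of x] by linarith
    then show "ennreal (\<phi> x u) * indicator {x. t < \<bar>h x\<bar>} x \<le> ennreal (\<phi> x u) * indicator {x. t/2 < \<bar>f x\<bar>} x + ennreal (\<phi> x u) * indicator {x. t/2 < \<bar>g x\<bar>} x"
      by (auto simp: indicator_def)
  qed
  also have "\<dots> = phiE \<phi> {x. t/2 < \<bar>f x\<bar>} ((t/2) / lam) + phiE \<phi> {x. t/2 < \<bar>g x\<bar>} ((t/2) / lam)"
    unfolding phiE_def u_def[symmetric] by (intro nn_integral_add) measurable
  also have "\<dots> \<le> (SUP t\<in>{0<..}. phiE \<phi> {x. \<bar>f x\<bar> > t} (t / lam)) + (SUP t\<in>{0<..}. phiE \<phi> {x. \<bar>g x\<bar> > t} (t / lam))"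
    using t by (intro add_mono SUP_upper) auto
  finally show "phiE \<phi> {x. t < \<bar>h x\<bar>} (t / (2 * lam)) \<le> (SUP t\<in>{0<..}. phiE \<phi> {x. \<bar>f x\<bar> > t} (t / lam)) + (SUP t\<in>{0<..}. phiE \<phi> {x. \<bar>g x\<bar> > t} (t / lam))" .
qed

lemma Mf_finite_to_one:
  assumes mo: "musielak_orlicz \<phi>" and C: "C > 0" and p: "p > 0"
    and lt: "\<forall>x t s. t \<ge> 0 \<longrightarrow> 0 < s \<longrightarrow> s \<le> 1 \<longrightarrow> \<phi> x (s * t) \<le> C * s powr p * \<phi> x t"
    and f[measurable]: "f \<in> borel_measurable lebesgue" and lam: "0 < lam" and fin: "Mf \<phi> f lam < \<infinity>"
  shows "\<exists>lam'>0. Mf \<phi> f lam' \<le> 1"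
proof -
  define a where "a = enn2real (Mf \<phi> f lam)"
  have a: "Mf \<phi> f lam = ennreal a" "0 \<le> a" using fin by (auto simp: a_def less_top[symmetric] ennreal_enn2real)
  define b where "b = 1 / (C * (a + 1))"
  have b: "0 < b" using C a by (simp add: b_def)
  define s where "s = min 1 (b powr (1/p))"
  have s: "0 < s" "s \<le> 1" using b by (auto simp: s_def)
  have "s powr p \<le> (b powr (1/p)) powr p"
    using s p b by (intro powr_mono2) (auto simp: s_def)
  also have "\<dots> = b" using p b by (simp add: powr_powr)
  finally have sp: "s powr p \<le> b" .
  have "C * s powr p * a \<le> C * b * a" using sp C a by (intro mult_right_mono mult_left_mono) auto
  also have "\<dots> \<le> 1"
  proof -
    have "C * b = 1 / (a+1)" using C a by (simp add: b_def)
    then show ?thesis using a by simp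
  qed
  finally have key: "C * s powr p * a \<le> 1" .
  have "Mf \<phi> f (lam / s) \<le> ennreal (C * s powr p) * Mf \<phi> f lam"
    by (rule Mf_scale[OF mo C lt f s lam])
  also have "\<dots> = ennreal (C * s powr p * a)" using a C by (simp add: ennreal_mult)
  also have "\<dots> \<le> 1" using key by (simp add: ennreal_le_1)
  finally show ?thesis using lam s by (intro exI[of _ "lam / s"]) auto
qed

lemma Mf_diff_ok:
  assumes mo: "musielak_orlicz \<phi>" and C: "C > 0" and p: "p > 0"
    and lt: "\<forall>x t s. t \<ge> 0 \<longrightarrow> 0 < s \<longrightarrow> s \<le> 1 \<longrightarrow> \<phi> x (s * t) \<le> C * s powr p * \<phi> x t"
    and F: "F \<in> WL \<phi>" and G: "G \<in> WL \<phi>"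
  shows "\<exists>lam>0. Mf \<phi> (\<lambda>x. F x - G x) lam \<le> 1"
proof -
  from F obtain l1 where Fm[measurable]: "F \<in> borel_measurable lebesgue" and l1: "l1 > 0" "Mf \<phi> F l1 < \<infinity>"
    unfolding WL_Mf by auto
  from G obtain l2 where Gm[measurable]: "G \<in> borel_measurable lebesgue" and l2: "l2 > 0" "Mf \<phi> G l2 < \<infinity>"
    unfolding WL_Mf by auto
  define l where "l = max l1 l2"
  have l: "l > 0" using l1 by (simp add: l_def)
  have "Mf \<phi> (\<lambda>x. F x - G x) (2 * l) \<le> Mf \<phi> F l + Mf \<phi> G l"
    using l by (intro Mf_tri[OF mo Fm Gm]) auto
  also have "\<dots> \<le> Mf \<phi> F l1 + Mf \<phi> G l2"
    using l1 l2 by (intro add_mono Mf_mono[OF mo]) (auto simp: l_def)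
  also have "\<dots> < \<infinity>" using l1 l2 by simp
  finally have "Mf \<phi> (\<lambda>x. F x - G x) (2 * l) < \<infinity>" .
  moreover have "(\<lambda>x. F x - G x) \<in> borel_measurable lebesgue" by measurable
  ultimately show ?thesis using Mf_finite_to_one[OF mo C p lt] l by (metis mult_pos_pos zero_less_numeral)
qed

theorem theorem2p9:
  fixes \<phi> :: "real ^ 'n::finite \<Rightarrow> real \<Rightarrow> real"
    and F :: "nat \<Rightarrow> real ^ 'n \<Rightarrow> real"
  assumes "growth_function \<phi>"
    and "\<And>k. F k \<in> WL \<phi>"
    and "\<And>\<epsilon>. \<epsilon> > 0 \<Longrightarrow> \<exists>N. \<forall>k\<ge>N. \<forall>m\<ge>N. WL_norm \<phi> (\<lambda>x. F k x - F m x) < \<epsilon>"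
  shows "\<exists>f \<in> WL \<phi>. (\<lambda>k. WL_norm \<phi> (\<lambda>x. F k x - f x)) \<longlonglongrightarrow> 0"
proof -
  from assms(1) obtain p C where mo: "musielak_orlicz \<phi>" and p: "0 < p" and C: "C > 0"
    and lt: "\<forall>x t s. t \<ge> 0 \<longrightarrow> 0 < s \<longrightarrow> s \<le> 1 \<longrightarrow> \<phi> x (s * t) \<le> C * s powr p * \<phi> x t"
    unfolding growth_function_def unif_lower_type_def by blast
  have Fm[measurable]: "\<And>k. F k \<in> borel_measurable lebesgue" using assms(2) unfolding WL_Mf by auto
  have cau: "\<exists>N. \<forall>k\<ge>N. \<forall>m\<ge>N. Mf \<phi> (\<lambda>x. F k x - F m x) e \<le> 1" if e: "e > 0" for e
  proof -
    obtain N where N: "\<forall>k\<ge>N. \<forall>m\<ge>N. WL_norm \<phi> (\<lambda>x. F k x - F m x) < e" using assms(3)[OF e] by blast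
    show ?thesis
      using N Mf_diff_ok[OF mo C p lt assms(2) assms(2)] norm_lt[OF mo] by blast
  qed
  have "\<forall>j. \<exists>N. \<forall>k\<ge>N. \<forall>m\<ge>N. Mf \<phi> (\<lambda>x. F k x - F m x) ((1/4)^j) \<le> 1"
    using cau by simp
  then obtain N where N: "\<And>j. \<forall>k\<ge>N j. \<forall>m\<ge>N j. Mf \<phi> (\<lambda>x. F k x - F m x) ((1/4)^j) \<le> 1"
    by metis
  define kk where "kk j = (\<Sum>i\<le>j. N i) + j" for j
  have kk1: "N j \<le> kk j" for j
    unfolding kk_def using member_le_sum[of j "{..j}" N] by auto
  have kk2: "N j \<le> kk (Suc j)" for j
    using kk1[of j] unfolding kk_def by simp
  have kk3: "j \<le> kk j" for j unfolding kk_def by simp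
  define g where "g j x = F (kk (Suc j)) x - F (kk j) x" for j x
  define E where "E j = {x. (1/2)^j < \<bar>g j x\<bar>}" for j
  have gm[measurable]: "g j \<in> borel_measurable lebesgue" for j unfolding g_def by measurable
  have Em[measurable]: "E j \<in> sets lebesgue" for j unfolding E_def by (rule sets_gt[OF gm])
  have E2: "phiE \<phi> (E j) (2^j) \<le> 1" for j
  proof -
    have "phiE \<phi> (E j) (2^j) = phiE \<phi> {x. \<bar>g j x\<bar> > (1/2)^j} ((1/2)^j / (1/4)^j)"
    proof -
      have "(1/2::real)^j / (1/4)^j = ((1/2)/(1/4))^j" by (rule power_divide[symmetric])
      then have h: "(1/2::real)^j / (1/4)^j = 2^j" by simp
      show ?thesis unfolding E_def h ..
    qed
    also have "\<dots> \<le> Mf \<phi> (g j) ((1/4)^j)"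
      unfolding Mf_def by (intro SUP_upper) auto
    also have "\<dots> \<le> 1" using N[of j] kk1[of j] kk2[of j] unfolding g_def by blast
    finally show ?thesis .
  qed
  have E1: "phiE \<phi> (E j) 1 \<le> ennreal (C * ((1/2) powr p)^j)" for j
  proof -
    have "phiE \<phi> (E j) 1 = phiE \<phi> (E j) ((1/2)^j * 2^j)" by (simp add: power_mult_distrib[symmetric])
    also have "\<dots> \<le> ennreal (C * ((1/2)^j) powr p) * phiE \<phi> (E j) (2^j)"
      by (intro phiE_scale[OF mo C lt Em]) (auto intro: power_le_one)
    also have "\<dots> \<le> ennreal (C * ((1/2)^j) powr p) * 1"
      by (intro mult_left_mono E2) auto
    also have "((1/2::real)^j) powr p = ((1/2) powr p)^j"
      by (simp add: powr_realpow[symmetric] powr_powr powr_power mult.commute)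
    finally show ?thesis by simp
  qed
  define D where "D = density lebesgue (\<lambda>x. ennreal (\<phi> x 1))"
  have ph1[measurable]: "(\<lambda>x. \<phi> x 1) \<in> borel_measurable lebesgue" using mo_meas[OF mo] by simp
  have sD[simp]: "sets D = sets lebesgue" "space D = UNIV" unfolding D_def by auto
  have emD: "emeasure D (E j) = phiE \<phi> (E j) 1" for j
    unfolding D_def phiE_def by (rule emeasure_density) measurable
  have geo: "summable (\<lambda>j. C * ((1/2) powr p)^j)"
  proof -
    have "(1/2::real) powr p < 1" using powr_less_mono2[OF p, of "1/2" 1] by simp
    then show ?thesis by (intro summable_mult summable_geometric) simp
  qed
  have "AE x in D. eventually (\<lambda>n. x \<in> space D - E n) sequentially"
  proof (rule borel_cantelli_AE1)
    show "E n \<in> sets D" for n by simp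
    show "emeasure D (E n) < \<infinity>" for n using E1[of n] emD[of n] by (simp add: le_less_trans)
    show "summable (\<lambda>n. measure D (E n))"
    proof (rule summable_comparison_test'[OF geo])
      fix n
      have "measure D (E n) \<le> C * ((1/2) powr p)^n"
        unfolding measure_def emD using E1[of n] C
        by (metis enn2real_ennreal enn2real_mono ennreal_less_top mult_nonneg_nonneg order_less_imp_le powr_ge_zero zero_le_power)
      then show "norm (measure D (E n)) \<le> C * ((1/2) powr p)^n" by simp
    qed
  qed
  then have "AE x in lebesgue. 0 < ennreal (\<phi> x 1) \<longrightarrow> eventually (\<lambda>n. x \<in> space D - E n) sequentially"
    unfolding D_def by (subst (asm) AE_density) auto
  then have AEev: "AE x in lebesgue. eventually (\<lambda>n. x \<notin> E n) sequentially"
    using mo_pos[OF mo, of 1] by (auto elim!: AE_mp)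
  have tele: "F (kk j) x = F (kk 0) x + (\<Sum>i<j. g i x)" for j x
    by (induction j) (auto simp: g_def)
  have conv: "AE x in lebesgue. \<exists>L. (\<lambda>j. F (kk j) x) \<longlonglongrightarrow> L"
    using AEev
  proof (rule AE_mp, intro AE_I2 impI)
    fix x assume ev: "eventually (\<lambda>n. x \<notin> E n) sequentially"
    then obtain n0 where n0: "\<And>n. n \<ge> n0 \<Longrightarrow> x \<notin> E n" by (auto simp: eventually_sequentially)
    have "summable (\<lambda>j. g j x)"
    proof (rule summable_comparison_test'[of "\<lambda>j. (1/2)^j" n0])
      show "summable (\<lambda>j. (1/2::real)^j)" by (rule summable_geometric) simp
      fix n assume "n \<ge> n0"
      then show "norm (g n x) \<le> (1/2)^n" using n0[of n] unfolding E_def by auto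
    qed
    then have "(\<lambda>j. F (kk 0) x + (\<Sum>i<j. g i x)) \<longlonglongrightarrow> F (kk 0) x + (\<Sum>i. g i x)"
      by (intro tendsto_add tendsto_const summable_LIMSEQ)
    moreover have eq: "(\<lambda>j. F (kk j) x) = (\<lambda>j. F (kk 0) x + (\<Sum>i<j. g i x))"
      by (rule ext) (rule tele)
    ultimately show "\<exists>L. (\<lambda>j. F (kk j) x) \<longlonglongrightarrow> L" unfolding eq by blast
  qed
  define f where "f x = real_of_ereal (limsup (\<lambda>j. ereal (F (kk j) x)))" for x
  have fm[measurable]: "f \<in> borel_measurable lebesgue" unfolding f_def by measurable
  have lim: "AE x in lebesgue. (\<lambda>j. F (kk j) x) \<longlonglongrightarrow> f x"
    using conv
  proof (rule AE_mp, intro AE_I2 impI)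
    fix x assume "\<exists>L. (\<lambda>j. F (kk j) x) \<longlonglongrightarrow> L"
    then obtain L where L: "(\<lambda>j. F (kk j) x) \<longlonglongrightarrow> L" by blast
    have "limsup (\<lambda>j. ereal (F (kk j) x)) = ereal L"
      by (intro lim_imp_Limsup) (auto intro: tendsto_ereal L)
    then have "f x = L" unfolding f_def by simp
    then show "(\<lambda>j. F (kk j) x) \<longlonglongrightarrow> f x" using L by simp
  qed
  have main: "\<exists>M. \<forall>k\<ge>M. Mf \<phi> (\<lambda>x. F k x - f x) e \<le> 1" if e: "e > 0" for e
  proof -
    obtain M where M: "\<forall>k\<ge>M. \<forall>m\<ge>M. Mf \<phi> (\<lambda>x. F k x - F m x) e \<le> 1" using cau[OF e] by blast
    have "Mf \<phi> (\<lambda>x. F k x - f x) e \<le> 1" if k: "k \<ge> M" for k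
      unfolding Mf_def
    proof (intro SUP_least)
      fix t :: real assume t: "t \<in> {0<..}"
      define u where "u = t / e"
      have u: "0 \<le> u" using t e by (simp add: u_def)
      note [measurable] = mo_meas[OF mo u]
      define B where "B j = {x. t < \<bar>F k x - F (kk j) x\<bar>}" for j
      have Bm[measurable]: "B j \<in> sets lebesgue" for j unfolding B_def
        by (rule sets_gt) measurable
      have "phiE \<phi> {x. t < \<bar>F k x - f x\<bar>} u \<le> (\<integral>\<^sup>+ x. liminf (\<lambda>j. ennreal (\<phi> x u) * indicator (B j) x) \<partial>lebesgue)"
        unfolding phiE_def
      proof (rule nn_integral_mono_AE)
        show "AE x in lebesgue. ennreal (\<phi> x u) * indicator {x. t < \<bar>F k x - f x\<bar>} x \<le> liminf (\<lambda>j. ennreal (\<phi> x u) * indicator (B j) x)"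
          using lim
        proof (rule AE_mp, intro AE_I2 impI)
          fix x assume Lx: "(\<lambda>j. F (kk j) x) \<longlonglongrightarrow> f x"
          show "ennreal (\<phi> x u) * indicator {x. t < \<bar>F k x - f x\<bar>} x \<le> liminf (\<lambda>j. ennreal (\<phi> x u) * indicator (B j) x)"
          proof (cases "t < \<bar>F k x - f x\<bar>")
            case True
            have "(\<lambda>j. \<bar>F k x - F (kk j) x\<bar>) \<longlonglongrightarrow> \<bar>F k x - f x\<bar>"
              by (intro tendsto_intros Lx)
            then have "eventually (\<lambda>j. t < \<bar>F k x - F (kk j) x\<bar>) sequentially"
              using True by (rule order_tendstoD)
            then have "eventually (\<lambda>j. ennreal (\<phi> x u) \<le> ennreal (\<phi> x u) * indicator (B j) x) sequentially"
              by eventually_elim (simp add: B_def)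
            then have "ennreal (\<phi> x u) \<le> liminf (\<lambda>j. ennreal (\<phi> x u) * indicator (B j) x)"
              by (rule Liminf_bounded)
            then show ?thesis using True by simp
          qed simp
        qed
      qed
      also have "\<dots> \<le> liminf (\<lambda>j. \<integral>\<^sup>+ x. ennreal (\<phi> x u) * indicator (B j) x \<partial>lebesgue)"
        by (rule nn_integral_liminf) measurable
      also have "\<dots> \<le> 1"
      proof (rule Liminf_le)
        show "eventually (\<lambda>j. (\<integral>\<^sup>+ x. ennreal (\<phi> x u) * indicator (B j) x \<partial>lebesgue) \<le> 1) sequentially"
          unfolding eventually_sequentially
        proof (intro exI allI impI)
          fix j assume j: "j \<ge> M"
          have "(\<integral>\<^sup>+ x. ennreal (\<phi> x u) * indicator (B j) x \<partial>lebesgue) = phiE \<phi> {x. \<bar>F k x - F (kk j) x\<bar> > t} (t / e)"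
            unfolding phiE_def B_def u_def ..
          also have "\<dots> \<le> Mf \<phi> (\<lambda>x. F k x - F (kk j) x) e"
            unfolding Mf_def using t by (intro SUP_upper) auto
          also have "\<dots> \<le> 1" using M k kk3[of j] j by auto
          finally show "(\<integral>\<^sup>+ x. ennreal (\<phi> x u) * indicator (B j) x \<partial>lebesgue) \<le> 1" .
        qed
      qed simp
      finally show "phiE \<phi> {x. t < \<bar>F k x - f x\<bar>} (t / e) \<le> 1" unfolding u_def .
    qed
    then show ?thesis by blast
  qed
  have fWL: "f \<in> WL \<phi>"
  proof -
    obtain k where k: "Mf \<phi> (\<lambda>x. F k x - f x) 1 \<le> 1" using main[of 1] by auto
    obtain l0 where l0: "l0 > 0" "Mf \<phi> (F k) l0 < \<infinity>" using assms(2)[of k] unfolding WL_Mf by auto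
    define l where "l = max l0 1"
    have l: "l > 0" by (simp add: l_def)
    have "Mf \<phi> f (2 * l) \<le> Mf \<phi> (F k) l + Mf \<phi> (\<lambda>x. F k x - f x) l"
      by (rule Mf_tri[OF mo]) (auto simp: l)
    also have "\<dots> \<le> Mf \<phi> (F k) l0 + Mf \<phi> (\<lambda>x. F k x - f x) 1"
      using l0 by (intro add_mono Mf_mono[OF mo]) (auto simp: l_def)
    also have "\<dots> < \<infinity>" using l0 k by (simp add: le_less_trans)
    finally show ?thesis unfolding WL_Mf using l fm
      by (auto intro!: exI[of _ "2 * l"])
  qed
  have "(\<lambda>k. WL_norm \<phi> (\<lambda>x. F k x - f x)) \<longlonglongrightarrow> 0"
  proof (rule LIMSEQ_I)
    fix r :: real assume r: "r > 0"
    obtain M where M: "\<forall>k\<ge>M. Mf \<phi> (\<lambda>x. F k x - f x) (r/2) \<le> 1" using main[of "r/2"] r by auto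
    show "\<exists>no. \<forall>n\<ge>no. norm (WL_norm \<phi> (\<lambda>x. F n x - f x) - 0) < r"
    proof (intro exI allI impI)
      fix n assume "n \<ge> M"
      then have "0 \<le> WL_norm \<phi> (\<lambda>x. F n x - f x) \<and> WL_norm \<phi> (\<lambda>x. F n x - f x) \<le> r/2"
        using M r by (intro norm_le) auto
      then show "norm (WL_norm \<phi> (\<lambda>x. F n x - f x) - 0) < r" using r by simp
    qed
  qed
  then show ?thesis using fWL by blast
qed

end
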